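(* Let $\mathcal{A}$ be a unital algebra over a field $F$ with $\operatorname{char}(F)\neq2$, having an idempotent $e\neq 0,1$, and write $e^{\perp}=1-e$. Assume that for every $x\in\mathcal{A}$: if $exe\cdot e\mathcal{A}e^{\perp}=\{0\}=e^{\perp}\mathcal{A}e\cdot exe$ then $exe=0$, and if $e\mathcal{A}e^{\perp}\cdot e^{\perp}xe^{\perp}=\{0\}=e^{\perp}xe^{\perp}\cdot e^{\perp}\mathcal{A}e$ then $e^{\perp}xe^{\perp}=0$. Then $\operatorname{JCent}(\mathcal{A})=\operatorname{Cent}(\mathcal{A})$.
   Context: $x\circ y=xy+yx$. $\operatorname{JCent}(\mathcal{A})$: linear $f:\mathcal{A}\to\mathcal{A}$ with $f(x\circ y)=f(x)\circ y$ for all $x,y$. $\operatorname{Cent}(\mathcal{A})$: linear $f$ with $f(xy)=f(x)y=xf(y)$ for all $x,y$. *)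

theory Defs
  imports Main "HOL.Vector_Spaces"
begin

text \<open>Unital associative algebra over a field: the ring structure is the type class
  ring_1 on 'a, and the scalar multiplication by the field 'k is sc, which must make
  'a a vector space over 'k and be compatible with the multiplication.\<close>

definition is_algebra :: "('k::field \<Rightarrow> 'a::ring_1 \<Rightarrow> 'a) \<Rightarrow> bool" where
  "is_algebra sc \<longleftrightarrow> Vector_Spaces.vector_space sc \<and>
     (\<forall>c x y. sc c (x * y) = sc c x * y \<and> sc c (x * y) = x * sc c y)"

definition jprod :: "'a::ring \<Rightarrow> 'a \<Rightarrow> 'a" (infixl "\<circ>\<^sub>J" 70) where
  "x \<circ>\<^sub>J y = x * y + y * x"

definition JCent :: "('k::field \<Rightarrow> 'a::ring_1 \<Rightarrow> 'a) \<Rightarrow> ('a \<Rightarrow> 'a) set" where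
  "JCent sc = {f. Vector_Spaces.linear sc sc f \<and> (\<forall>x y. f (x \<circ>\<^sub>J y) = f x \<circ>\<^sub>J y)}"

definition Cent :: "('k::field \<Rightarrow> 'a::ring_1 \<Rightarrow> 'a) \<Rightarrow> ('a \<Rightarrow> 'a) set" where
  "Cent sc = {f. Vector_Spaces.linear sc sc f \<and> (\<forall>x y. f (x * y) = f x * y \<and> f (x * y) = x * f y)}"

end

theory Submission
  imports Defs
begin

lemma halve_cancel:
  fixes sc :: "'k::field \<Rightarrow> 'a::ring_1 \<Rightarrow> 'a" and u v :: 'a
  assumes vs: "Vector_Spaces.vector_space sc" and char: "(2::'k) \<noteq> 0"
    and eq: "u + u = v + v"
  shows "u = v"
proof -
  have md: "module sc" using vs by (simp add: module_iff_vector_space)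
  have d: "sc 2 z = z + z" for z
  proof -
    have "sc (1 + 1) z = sc 1 z + sc 1 z"
      by (rule module.scale_left_distrib[OF md])
    then show ?thesis using md by (simp add: module.scale_one)
  qed
  have "sc 2 u = sc 2 v" using eq d by simp
  then show ?thesis using vs char vector_space.scale_cancel_left by metis
qed

lemma piece:
  fixes a p q y :: "'a::ring_1"
  assumes pp: "p * p = p" and pq: "p * q = 0" and qp: "q * p = 0" and ap: "a * p = p * a"
    and cent: "\<And>x y. (a * y - y * a) * x = x * (a * y - y * a)"
    and H: "\<And>x. (\<forall>b. (p * x * p) * (p * b * q) = 0) \<Longrightarrow> (\<forall>b. (q * b * p) * (p * x * p) = 0) \<Longrightarrow> p * x * p = 0"
  shows "(a * y - y * a) * p = 0"
proof -
  define c where "c = a * y - y * a"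
  define w where "w = a * (p * y * p) - (p * y * p) * a"
  have wc: "w * x = x * w" for x using cent[of "p * y * p" x] by (simp add: w_def)
  have 1: "a * (p * y * p) = p * (a * y) * p" by (metis ap mult.assoc)
  have 2: "(p * y * p) * a = p * (y * a) * p" by (metis ap mult.assoc)
  have we: "w = p * c * p" unfolding w_def c_def 1 2 by (simp add: right_diff_distrib left_diff_distrib)
  have pwp: "p * w * p = w" unfolding we by (metis pp mult.assoc)
  have "p * w * p = 0"
  proof (rule H; intro allI)
    fix b
    have "(p * w * p) * (p * b * q) = (p * b * q) * w" using pwp wc by simp
    also have "\<dots> = p * b * (q * p) * c * p" unfolding we by (simp add: mult.assoc)
    finally show "(p * w * p) * (p * b * q) = 0" using qp by simp
  next
    fix b
    have "(q * b * p) * (p * w * p) = w * (q * b * p)" using pwp wc by simp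
    also have "\<dots> = p * c * (p * q) * b * p" unfolding we by (simp add: mult.assoc)
    finally show "(q * b * p) * (p * w * p) = 0" using pq by simp
  qed
  then have "p * c * p = 0" using pwp we by simp
  moreover have "p * c * p = c * p" using cent[of y p] pp unfolding c_def by (metis mult.assoc)
  ultimately show ?thesis by (simp add: c_def)
qed

theorem proposition3p7:
  fixes sc :: "'k::field \<Rightarrow> 'a::ring_1 \<Rightarrow> 'a" and e :: 'a
  assumes alg: "is_algebra sc"
    and char: "(2::'k) \<noteq> 0"
    and idem: "e * e = e" and e0: "e \<noteq> 0" and e1: "e \<noteq> 1"
    and H1: "\<And>x. (\<forall>a. (e * x * e) * (e * a * (1 - e)) = 0) \<Longrightarrow>
                  (\<forall>a. ((1 - e) * a * e) * (e * x * e) = 0) \<Longrightarrow> e * x * e = 0"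
    and H2: "\<And>x. (\<forall>a. (e * a * (1 - e)) * ((1 - e) * x * (1 - e)) = 0) \<Longrightarrow>
                  (\<forall>a. ((1 - e) * x * (1 - e)) * ((1 - e) * a * e) = 0) \<Longrightarrow>
                  (1 - e) * x * (1 - e) = 0"
  shows "JCent sc = Cent sc"
proof
  show "Cent sc \<subseteq> JCent sc"
  proof
    fix f assume "f \<in> Cent sc"
    then have lin: "Vector_Spaces.linear sc sc f"
      and m: "\<And>x y. f (x * y) = f x * y \<and> f (x * y) = x * f y" unfolding Cent_def by blast+
    have "f (x \<circ>\<^sub>J y) = f x \<circ>\<^sub>J y" for x y
    proof -
      have "f (x \<circ>\<^sub>J y) = f (x * y) + f (y * x)"
        unfolding jprod_def using lin by (simp add: module_hom.add module_hom_iff_linear[symmetric])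
      also have "\<dots> = f x * y + y * f x" using m by metis
      finally show ?thesis by (simp add: jprod_def)
    qed
    then show "f \<in> JCent sc" using lin by (simp add: JCent_def)
  qed
next
  show "JCent sc \<subseteq> Cent sc"
  proof
    fix f assume "f \<in> JCent sc"
    then have lin: "Vector_Spaces.linear sc sc f"
      and J: "\<And>x y. f (x \<circ>\<^sub>J y) = f x \<circ>\<^sub>J y" by (auto simp: JCent_def)
    have vs: "Vector_Spaces.vector_space sc" using alg by (simp add: is_algebra_def)
    have add: "f (x + y) = f x + f y" for x y using lin by (simp add: module_hom.add module_hom_iff_linear[symmetric])
    define a where "a = f 1"
    have fy: "f y + f y = a * y + y * a" for y
      using J[of 1 y] add[of y y] by (simp add: jprod_def a_def)
    have cent: "(a * y - y * a) * x = x * (a * y - y * a)" for x y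
    proof -
      have "f (x \<circ>\<^sub>J y) + f (x \<circ>\<^sub>J y) = a * (x \<circ>\<^sub>J y) + (x \<circ>\<^sub>J y) * a" by (rule fy)
      also have "f (x \<circ>\<^sub>J y) + f (x \<circ>\<^sub>J y) = (f x + f x) * y + y * (f x + f x)"
        using J[of x y] by (simp add: jprod_def algebra_simps)
      finally have "(a * x + x * a) * y + y * (a * x + x * a) = a * (x * y + y * x) + (x * y + y * x) * a"
        using fy[of x] by (simp add: jprod_def)
      then have "a*x*y + x*a*y + y*a*x + y*x*a = a*x*y + a*y*x + x*y*a + y*x*a"
        by (simp add: algebra_simps)
      then have "x*a*y + y*a*x = a*y*x + x*y*a" by (simp add: add.assoc)
      then show ?thesis by (simp add: algebra_simps)
    qed
    have ae: "a * e = e * a"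
    proof -
      define z where "z = a * e - e * a"
      have e2: "e * (e * x) = e * x" for x by (metis idem mult.assoc)
      have ez1: "e * z = e * a * e - e * a" unfolding z_def by (simp add: right_diff_distrib mult.assoc e2)
      have ze1: "z * e = a * e - e * a * e" unfolding z_def by (simp add: left_diff_distrib mult.assoc idem)
      have zz: "z = e * z + z * e" unfolding ez1 ze1 by (simp add: z_def)
      have ez: "e * z = z * e" using cent[of e e] by (simp add: z_def)
      have "e * z = e * (e * z + z * e)" using zz by simp
      also have "\<dots> = e * (e * z) + e * (e * z)" by (simp add: distrib_left ez)
      also have "\<dots> = e * z + e * z" by (simp add: e2)
      finally have "e * z = 0" by simp
      then have "z = 0" using zz ez by simp
      then show ?thesis by (simp add: z_def)
    qed
    have ee: "e * (1 - e) = 0" "(1 - e) * e = 0" "(1 - e) * (1 - e) = 1 - e"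
      using idem by (simp_all add: algebra_simps)
    have ae': "a * (1 - e) = (1 - e) * a" using ae by (simp add: algebra_simps)
    have comm: "a * y = y * a" for y
    proof -
      have "(a * y - y * a) * e = 0"
        by (rule piece[OF idem ee(1) ee(2) ae cent H1]) blast+
      moreover have "(a * y - y * a) * (1 - e) = 0"
        by (rule piece[OF ee(3) ee(2) ee(1) ae' cent H2]) blast+
      ultimately have "a * y - y * a = 0" by (simp add: algebra_simps)
      then show ?thesis by simp
    qed
    have fa: "f y = a * y" for y
      using halve_cancel[OF vs char] fy[of y] comm[of y] by metis
    have "f (x * y) = f x * y \<and> f (x * y) = x * f y" for x y
      unfolding fa by (metis comm mult.assoc)
    then show "f \<in> Cent sc" using lin unfolding Cent_def by blast
  qed
qed

end
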